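(* Linear regression in both directions, even strictly linear, does not imply that the maximal correlation equals the absolute correlation. Precisely: with $f_1,f_2,\{\rho_n\}$ and $f$ as in the context, if $0<|\rho_1|<\sup_{n\ge2}|\rho_n|$ and $(X,Y)$ has density $f$, then there are constants $a_0,a_1,b_0,b_1$ with $a_1b_1\neq0$ such that $\mathbb{E}(X\mid Y)=a_1Y+a_0$ a.s. and $\mathbb{E}(Y\mid X)=b_1X+b_0$ a.s., and yet $R(X,Y)>|\rho(X,Y)|>0$. Moreover, such sequences $\{\rho_n\}$ exist for any such $f_1,f_2$ (e.g. $\rho_n=\lambda n$ for $n=1,\dots,N$ with $N\ge2$, $\rho_n=0$ for $n>N$, and $0<\lambda\le(\sum_{n=1}^N nc_nd_n)^{-1}$).
   Context: Let $f_1,f_2$ be probability densities (w.r.t. Lebesgue measure on $\mathbb{R}$) with bounded supports, $\mathrm{supp}(f_i)\subseteq[\alpha_i,\omega_i]$, $-\infty<\alpha_i<\omega_i<\infty$ ($i=1,2$). Let $\{\phi_n\}_{n\ge0}$ be the orthonormal polynomial system in $L_2(f_1(x)dx)$ with $\deg\phi_n=n$ and leading coefficient $p_n>0$, and $\{\psi_n\}_{n\ge0}$ the orthonormal polynomial system in $L_2(f_2(y)dy)$ with $\deg\psi_n=n$ and leading coefficient $q_n>0$. Let $c_n=\sup_{\alpha_1\le x\le\omega_1}|\phi_n(x)|$ and $d_n=\sup_{\alpha_2\le y\le\omega_2}|\psi_n(y)|$ for $n\ge1$. Let $\{\rho_n\}_{n\ge1}$ be a real sequence with $\sum_{n=1}^\infty|\rho_n|c_nd_n\le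 1$. Define $f(x,y)=f_1(x)f_2(y)\bigl(1+\sum_{n=1}^\infty\rho_n\phi_n(x)\psi_n(y)\bigr)$ for $(x,y)\in[\alpha_1,\omega_1]\times[\alpha_2,\omega_2]$ and $f(x,y)=0$ otherwise; this is a bivariate probability density with marginals $f_1,f_2$. The Pearson correlation is $\rho(X,Y)=\mathrm{Cov}(X,Y)/\sqrt{\mathrm{Var}(X)\mathrm{Var}(Y)}$. For a non-degenerate random variable $W$, $L_2^*(W)$ denotes the class of measurable $g:\mathbb{R}\to\mathbb{R}$ with $0<\mathrm{Var}[g(W)]<\infty$, and the maximal correlation is $R(X,Y)=\sup_{g_1\in L_2^*(X),\,g_2\in L_2^*(Y)}\rho(g_1(X),g_2(Y))$. *)

theory Defs
  imports "HOL-Probability.Probability" "HOL-Computational_Algebra.Polynomial"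
begin

definition bdd_density :: "(real \<Rightarrow> real) \<Rightarrow> real \<Rightarrow> real \<Rightarrow> bool" where
  "bdd_density g al om \<longleftrightarrow>
     al < om \<and> g \<in> borel_measurable lborel \<and> (\<forall>x. 0 \<le> g x) \<and>
     (\<forall>x. x \<notin> {al..om} \<longrightarrow> g x = 0) \<and>
     integrable lborel g \<and> (\<integral>x. g x \<partial>lborel) = 1"

definition orthonormal_polys :: "(real \<Rightarrow> real) \<Rightarrow> (nat \<Rightarrow> real poly) \<Rightarrow> bool" where
  "orthonormal_polys g P \<longleftrightarrow>
     (\<forall>n. degree (P n) = n \<and> lead_coeff (P n) > 0) \<and>
     (\<forall>m n. integrable lborel (\<lambda>x. poly (P m) x * poly (P n) x * g x) \<and>
            (\<integral>x. poly (P m) x * poly (P n) x * g x \<partial>lborel) = (if m = n then 1 else 0))"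

definition sup_on :: "real \<Rightarrow> real \<Rightarrow> real poly \<Rightarrow> real" where
  "sup_on al om p = Sup ((\<lambda>x. \<bar>poly p x\<bar>) ` {al..om})"

text \<open>Admissible coefficient sequence: sum over n>=1 of |rho_n| c_n d_n converges and is <= 1
  (rho 0 is unused).\<close>
definition admissible ::
  "real \<Rightarrow> real \<Rightarrow> real \<Rightarrow> real \<Rightarrow> (nat \<Rightarrow> real poly) \<Rightarrow> (nat \<Rightarrow> real poly) \<Rightarrow> (nat \<Rightarrow> real) \<Rightarrow> bool" where
  "admissible al1 om1 al2 om2 P Q rho \<longleftrightarrow>
     summable (\<lambda>n. \<bar>rho (Suc n)\<bar> * sup_on al1 om1 (P (Suc n)) * sup_on al2 om2 (Q (Suc n))) \<and>
     (\<Sum>n. \<bar>rho (Suc n)\<bar> * sup_on al1 om1 (P (Suc n)) * sup_on al2 om2 (Q (Suc n))) \<le> 1"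

definition biv_density ::
  "(real \<Rightarrow> real) \<Rightarrow> (real \<Rightarrow> real) \<Rightarrow> real \<Rightarrow> real \<Rightarrow> real \<Rightarrow> real \<Rightarrow>
   (nat \<Rightarrow> real poly) \<Rightarrow> (nat \<Rightarrow> real poly) \<Rightarrow> (nat \<Rightarrow> real) \<Rightarrow> real \<Rightarrow> real \<Rightarrow> real" where
  "biv_density f1 f2 al1 om1 al2 om2 P Q rho x y =
     (if x \<in> {al1..om1} \<and> y \<in> {al2..om2}
      then f1 x * f2 y * (1 + (\<Sum>n. rho (Suc n) * poly (P (Suc n)) x * poly (Q (Suc n)) y))
      else 0)"

definition mean :: "'a measure \<Rightarrow> ('a \<Rightarrow> real) \<Rightarrow> real" where
  "mean M U = (\<integral>w. U w \<partial>M)"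

definition covar :: "'a measure \<Rightarrow> ('a \<Rightarrow> real) \<Rightarrow> ('a \<Rightarrow> real) \<Rightarrow> real" where
  "covar M U V = (\<integral>w. (U w - mean M U) * (V w - mean M V) \<partial>M)"

definition var :: "'a measure \<Rightarrow> ('a \<Rightarrow> real) \<Rightarrow> real" where
  "var M U = (\<integral>w. (U w - mean M U)\<^sup>2 \<partial>M)"

definition pcorr :: "'a measure \<Rightarrow> ('a \<Rightarrow> real) \<Rightarrow> ('a \<Rightarrow> real) \<Rightarrow> real" where
  "pcorr M U V = covar M U V / sqrt (var M U * var M V)"

text \<open>L2*(W): measurable g with 0 < Var g(W) < infinity (finiteness = square integrability).\<close>
definition L2star :: "'a measure \<Rightarrow> ('a \<Rightarrow> real) \<Rightarrow> (real \<Rightarrow> real) set" where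
  "L2star M W = {g. g \<in> borel_measurable borel \<and> integrable M (\<lambda>w. (g (W w))\<^sup>2) \<and>
                     0 < var M (\<lambda>w. g (W w))}"

definition maxcorr :: "'a measure \<Rightarrow> ('a \<Rightarrow> real) \<Rightarrow> ('a \<Rightarrow> real) \<Rightarrow> real" where
  "maxcorr M X Y = (SUP g \<in> L2star M X \<times> L2star M Y.
                      pcorr M (\<lambda>w. fst g (X w)) (\<lambda>w. snd g (Y w)))"

end

theory Submission
  imports Defs
begin


lemma pcorr_le1:
  fixes M :: "'a measure" and U V :: "'a \<Rightarrow> real"
  assumes "prob_space M" and mU[measurable]: "U \<in> borel_measurable M" and mV[measurable]: "V \<in> borel_measurable M"
    and iU: "integrable M (\<lambda>w. (U w)^2)" and iV: "integrable M (\<lambda>w. (V w)^2)"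
    and vU: "0 < var M U" and vV: "0 < var M V"
  shows "pcorr M U V \<le> 1"
proof -
  interpret prob_space M by fact
  have iU1: "integrable M U" by (rule square_integrable_imp_integrable[OF mU iU])
  have iV1: "integrable M V" by (rule square_integrable_imp_integrable[OF mV iV])
  define a where "a = mean M U"
  define b where "b = mean M V"
  define U' where "U' = (\<lambda>w. U w - a)"
  define V' where "V' = (\<lambda>w. V w - b)"
  have [measurable]: "U' \<in> borel_measurable M" "V' \<in> borel_measurable M" unfolding U'_def V'_def by measurable
  have e1: "(\<lambda>w. (U' w)^2) = (\<lambda>w. (U w)^2 - 2*a*U w + a^2)" unfolding U'_def by (auto simp: power2_diff)
  have iU2: "integrable M (\<lambda>w. (U' w)^2)" unfolding e1 using iU iU1 by auto
  have e2: "(\<lambda>w. (V' w)^2) = (\<lambda>w. (V w)^2 - 2*b*V w + b^2)" unfolding V'_def by (auto simp: power2_diff)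
  have iV2: "integrable M (\<lambda>w. (V' w)^2)" unfolding e2 using iV iV1 by auto
  have iUV: "integrable M (\<lambda>w. U' w * V' w)"
  proof (rule Bochner_Integration.integrable_bound[of M "\<lambda>w. (U' w)^2 + (V' w)^2"])
    show "integrable M (\<lambda>w. (U' w)\<^sup>2 + (V' w)\<^sup>2)" using iU2 iV2 by auto
    show "AE w in M. norm (U' w * V' w) \<le> norm ((U' w)\<^sup>2 + (V' w)\<^sup>2)"
    proof (rule AE_I2)
      fix w
      have "\<bar>U' w * V' w\<bar> \<le> (U' w)\<^sup>2 + (V' w)\<^sup>2"
      proof -
        have h1: "2 * \<bar>U' w\<bar> * \<bar>V' w\<bar> \<le> (U' w)\<^sup>2 + (V' w)\<^sup>2"
          using sum_squares_bound[of "\<bar>U' w\<bar>" "\<bar>V' w\<bar>"] by simp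
        have h2: "0 \<le> \<bar>U' w\<bar> * \<bar>V' w\<bar>" by simp
        have h3: "\<bar>U' w * V' w\<bar> = \<bar>U' w\<bar> * \<bar>V' w\<bar>" by (rule abs_mult)
        from h1 h2 h3 show ?thesis by linarith
      qed
      then show "norm (U' w * V' w) \<le> norm ((U' w)\<^sup>2 + (V' w)\<^sup>2)" by simp
    qed
  qed simp
  define A where "A = var M U"
  define B where "B = var M V"
  define C where "C = covar M U V"
  have A: "A = (\<integral>w. (U' w)^2 \<partial>M)" unfolding A_def var_def U'_def a_def ..
  have B: "B = (\<integral>w. (V' w)^2 \<partial>M)" unfolding B_def var_def V'_def b_def ..
  have C: "C = (\<integral>w. U' w * V' w \<partial>M)" unfolding C_def covar_def U'_def V'_def a_def b_def ..
  define rA where "rA = sqrt A"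
  define rB where "rB = sqrt B"
  have A0: "A > 0" "B > 0" using vU vV A_def B_def by auto
  have rAA: "rA^2 = A" "rB^2 = B" unfolding rA_def rB_def using A0 by auto
  have s0: "rA > 0" "rB > 0" unfolding rA_def rB_def using A0 by auto
  have ex: "(\<lambda>w. (rB * U' w - rA * V' w)^2) = (\<lambda>w. B * (U' w)^2 - (2*rA*rB) * (U' w * V' w) + A * (V' w)^2)"
    by (auto simp: power2_diff power_mult_distrib rAA[symmetric] algebra_simps)
  have "0 \<le> (\<integral>w. (rB * U' w - rA * V' w)^2 \<partial>M)" by simp
  also have "\<dots> = B * A - (2*rA*rB) * C + A * B"
    unfolding ex A B C using iU2 iV2 iUV by simp
  finally have "(2*rA*rB) * C \<le> 2 * (rA * rB)^2" by (simp add: power_mult_distrib rAA algebra_simps)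
  then have "C \<le> rA * rB" using s0 by (simp add: power2_eq_square)
  moreover have "sqrt (A * B) = rA * rB" unfolding rA_def rB_def by (simp add: real_sqrt_mult)
  ultimately show ?thesis unfolding pcorr_def A_def[symmetric] B_def[symmetric] C_def[symmetric]
    using s0 by (simp add: divide_le_eq_1)
qed




lemma poly_meas[measurable]: "(\<lambda>x. poly p x :: real) \<in> borel_measurable borel"
  by (intro borel_measurable_continuous_onI continuous_on_poly continuous_on_id)

lemma poly_meas'[measurable]: "f \<in> borel_measurable M \<Longrightarrow> (\<lambda>x. poly p (f x) :: real) \<in> borel_measurable M"
  using measurable_compose[OF _ poly_meas] by blast

lemma sup_on_ge:
  assumes "x \<in> {al..om}"
  shows "\<bar>poly p x\<bar> \<le> sup_on al om p"
proof -
  have "compact ((\<lambda>x. \<bar>poly p x\<bar>) ` {al..om})"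
    by (intro compact_continuous_image continuous_intros) auto
  then have "bdd_above ((\<lambda>x. \<bar>poly p x\<bar>) ` {al..om})"
    by (intro bounded_imp_bdd_above compact_imp_bounded)
  then show ?thesis unfolding sup_on_def using assms by (intro cSup_upper) auto
qed

lemma bdd_densityD:
  assumes "bdd_density g al om"
  shows "al < om" "g \<in> borel_measurable borel" "\<And>x. 0 \<le> g x" "\<And>x. x \<notin> {al..om} \<Longrightarrow> g x = 0"
    "integrable lborel g" "(\<integral>x. g x \<partial>lborel) = 1"
  using assms unfolding bdd_density_def by auto

lemma dens_bound:
  assumes "bdd_density g al om" and um: "u \<in> borel_measurable borel"
    and ub: "\<And>x. x \<in> {al..om} \<Longrightarrow> \<bar>u x\<bar> \<le> C"
  shows "integrable lborel (\<lambda>x. g x * u x)" "\<And>x. \<bar>g x * u x\<bar> \<le> C * g x"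
    "(\<integral>x. \<bar>g x * u x\<bar> \<partial>lborel) \<le> C" "\<bar>\<integral>x. g x * u x \<partial>lborel\<bar> \<le> C" "0 \<le> C"
proof -
  note D = bdd_densityD[OF assms(1)]
  show C0: "0 \<le> C" using ub[of al] D(1) by auto
  show bd: "\<bar>g x * u x\<bar> \<le> C * g x" for x
  proof (cases "x \<in> {al..om}")
    case True
    have "g x * \<bar>u x\<bar> \<le> g x * C" by (rule mult_left_mono[OF ub[OF True] D(3)[of x]])
    then show ?thesis using D(3)[of x] by (simp add: abs_mult mult.commute)
  next
    case False then show ?thesis using D(4)[OF False] by simp
  qed
  have gm[measurable]: "g \<in> borel_measurable borel" by (rule D(2))
  note um[measurable]
  show int: "integrable lborel (\<lambda>x. g x * u x)"
    by (rule Bochner_Integration.integrable_bound[of lborel "\<lambda>x. C * g x"])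
       (use D(5) bd D(3) C0 in auto)
  have "(\<integral>x. \<bar>g x * u x\<bar> \<partial>lborel) \<le> (\<integral>x. C * g x \<partial>lborel)"
    by (rule integral_mono) (use int D(5) bd in auto)
  also have "\<dots> = C" using D(6) by simp
  finally show "(\<integral>x. \<bar>g x * u x\<bar> \<partial>lborel) \<le> C" .
  then show "\<bar>\<integral>x. g x * u x \<partial>lborel\<bar> \<le> C"
    using integral_abs_bound[of lborel "\<lambda>x. g x * u x"] by linarith
qed

lemma sep_prod:
  fixes a b :: "real \<Rightarrow> real"
  assumes ia: "integrable lborel a" and ib: "integrable lborel b"
  shows "integrable (lborel \<Otimes>\<^sub>M lborel) (\<lambda>z. a (fst z) * b (snd z))"
    "(\<integral>z. a (fst z) * b (snd z) \<partial>(lborel \<Otimes>\<^sub>M lborel)) = (\<integral>x. a x \<partial>lborel) * (\<integral>y. b y \<partial>lborel)"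
proof -
  have [measurable]: "a \<in> borel_measurable lborel" "b \<in> borel_measurable lborel"
    using ia ib by auto
  show int: "integrable (lborel \<Otimes>\<^sub>M lborel) (\<lambda>z. a (fst z) * b (snd z))"
  proof (rule lborel_pair.Fubini_integrable)
    show "(\<lambda>z. a (fst z) * b (snd z)) \<in> borel_measurable (lborel \<Otimes>\<^sub>M lborel)" by measurable
    have "(\<lambda>x. \<integral>y. norm (a (fst (x, y)) * b (snd (x, y))) \<partial>lborel) = (\<lambda>x. \<bar>a x\<bar> * (\<integral>y. \<bar>b y\<bar> \<partial>lborel))"
      by (simp add: abs_mult)
    moreover have "integrable lborel (\<lambda>x. \<bar>a x\<bar> * (\<integral>y. \<bar>b y\<bar> \<partial>lborel))"
      using ia by (intro integrable_mult_left) auto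
    ultimately show "integrable lborel (\<lambda>x. \<integral>y. norm (a (fst (x, y)) * b (snd (x, y))) \<partial>lborel)" by simp
    show "AE x in lborel. integrable lborel (\<lambda>y. a (fst (x, y)) * b (snd (x, y)))"
      using ib by (intro AE_I2) (simp add: integrable_mult_right)
  qed
  have "(\<integral>z. a (fst z) * b (snd z) \<partial>(lborel \<Otimes>\<^sub>M lborel)) = (\<integral>x. (\<integral>y. a (fst (x,y)) * b (snd (x,y)) \<partial>lborel) \<partial>lborel)"
    using lborel_pair.integral_fst'[OF int] by simp
  also have "\<dots> = (\<integral>x. a x \<partial>lborel) * (\<integral>y. b y \<partial>lborel)" by simp
  finally show "(\<integral>z. a (fst z) * b (snd z) \<partial>(lborel \<Otimes>\<^sub>M lborel)) = (\<integral>x. a x \<partial>lborel) * (\<integral>y. b y \<partial>lborel)" .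
qed

lemma ortho_int:
  assumes "orthonormal_polys g P"
  shows "integrable lborel (\<lambda>x. poly (P m) x * poly (P n) x * g x)"
    "(\<integral>x. poly (P m) x * poly (P n) x * g x \<partial>lborel) = (if m = n then 1 else 0)"
    "degree (P n) = n" "lead_coeff (P n) > 0"
  using assms unfolding orthonormal_polys_def by blast+

lemma ortho_P0:
  assumes "orthonormal_polys g P" "bdd_density g al om"
  shows "poly (P 0) x = 1"
proof -
  note O = ortho_int[OF assms(1)]
  have "degree (P 0) = 0" using O(3) by simp
  then obtain c where c: "P 0 = [:c:]" by (metis degree_eq_zeroE)
  have c0: "c > 0" using O(4)[of 0] c by simp
  have "(\<integral>x. poly (P 0) x * poly (P 0) x * g x \<partial>lborel) = 1" using O(2)[of 0 0] by simp
  then have "c * c * (\<integral>x. g x \<partial>lborel) = 1" by (simp add: c)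
  then have cc: "c * c = 1" using bdd_densityD(6)[OF assms(2)] by simp
  have "(c - 1) * (c + 1) = 0" using cc by (simp add: algebra_simps)
  then have "c = 1" using c0 by auto
  then show ?thesis by (simp add: c)
qed

lemma ortho_P1:
  assumes "orthonormal_polys g P"
  shows "poly (P 1) x = coeff (P 1) 0 + coeff (P 1) 1 * x" "coeff (P 1) 1 > 0"
proof -
  note O = ortho_int[OF assms]
  have d: "degree (P 1) = 1" using O(3) by simp
  show "poly (P 1) x = coeff (P 1) 0 + coeff (P 1) 1 * x" unfolding poly_altdef d by simp
  show "coeff (P 1) 1 > 0" using O(4)[of 1] d by simp
qed

lemma ortho_sup_ge1:
  assumes "orthonormal_polys g P" "bdd_density g al om"
  shows "1 \<le> sup_on al om (P n)"
proof -
  note O = ortho_int[OF assms(1)] and D = bdd_densityD[OF assms(2)]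
  define c where "c = sup_on al om (P n)"
  have b: "\<bar>poly (P n) x\<bar> \<le> c" if "x \<in> {al..om}" for x using sup_on_ge[OF that] c_def by simp
  have c0: "0 \<le> c" using b[of al] D(1) by auto
  have "1 = (\<integral>x. poly (P n) x * poly (P n) x * g x \<partial>lborel)" using O(2)[of n n] by simp
  also have "\<dots> \<le> (\<integral>x. c^2 * g x \<partial>lborel)"
  proof (rule integral_mono)
    show "integrable lborel (\<lambda>x. poly (P n) x * poly (P n) x * g x)" by (rule O(1))
    show "integrable lborel (\<lambda>x. c^2 * g x)" using D(5) by simp
    fix x
    show "poly (P n) x * poly (P n) x * g x \<le> c^2 * g x"
    proof (cases "x \<in> {al..om}")
      case True
      have "poly (P n) x * poly (P n) x = \<bar>poly (P n) x\<bar>^2" by (simp add: power2_eq_square)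
      also have "\<dots> \<le> c^2" using b[OF True] by (intro power_mono) auto
      finally show ?thesis using D(3)[of x] by (intro mult_right_mono) auto
    next
      case False then show ?thesis using D(4) by simp
    qed
  qed
  also have "\<dots> = c^2" using D(6) by simp
  finally have "1 \<le> c^2" .
  then have cc: "1 \<le> c * c" by (simp add: power2_eq_square)
  show ?thesis unfolding c_def[symmetric]
  proof (rule ccontr)
    assume "\<not> 1 \<le> c"
    then have "c * c \<le> c * 1" using c0 by (intro mult_left_mono) auto
    then show False using cc \<open>\<not> 1 \<le> c\<close> by linarith
  qed
qed




locale biv =
  fixes f1 f2 :: "real \<Rightarrow> real" and al1 om1 al2 om2 :: real
    and P Q :: "nat \<Rightarrow> real poly" and rho :: "nat \<Rightarrow> real"
  assumes d1: "bdd_density f1 al1 om1" and d2: "bdd_density f2 al2 om2"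
    and o1: "orthonormal_polys f1 P" and o2: "orthonormal_polys f2 Q"
    and adm: "admissible al1 om1 al2 om2 P Q rho"
begin

lemma swap: "biv f2 f1 al2 om2 al1 om1 Q P rho"
proof
  show "admissible al2 om2 al1 om1 Q P rho"
    using adm unfolding admissible_def by (simp add: mult_ac)
qed (use d1 d2 o1 o2 in auto)

abbreviation "K n \<equiv> \<bar>rho (Suc n)\<bar> * sup_on al1 om1 (P (Suc n)) * sup_on al2 om2 (Q (Suc n))"

lemma K_summable: "summable K" and K_le: "suminf K \<le> 1"
  using adm unfolding admissible_def by auto

lemma sup_on_nonneg: "al \<le> om \<Longrightarrow> 0 \<le> sup_on al om p"
  using sup_on_ge[of al al om p] by (meson abs_ge_zero atLeastAtMost_iff order.trans order_refl)

lemma K_nonneg: "0 \<le> K n"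
proof -
  have a: "0 \<le> sup_on al1 om1 (P (Suc n))" using sup_on_nonneg bdd_densityD(1)[OF d1] by (simp add: less_imp_le)
  have b: "0 \<le> sup_on al2 om2 (Q (Suc n))" using sup_on_nonneg bdd_densityD(1)[OF d2] by (simp add: less_imp_le)
  show ?thesis using a b by (metis abs_ge_zero mult_nonneg_nonneg)
qed

lemma t_bound:
  assumes "x \<in> {al1..om1}" "y \<in> {al2..om2}"
  shows "\<bar>rho (Suc n) * poly (P (Suc n)) x * poly (Q (Suc n)) y\<bar> \<le> K n"
proof -
  have a: "0 \<le> sup_on al1 om1 (P (Suc n))" using sup_on_nonneg bdd_densityD(1)[OF d1] by (simp add: less_imp_le)
  have "\<bar>rho (Suc n)\<bar> * \<bar>poly (P (Suc n)) x\<bar> \<le> \<bar>rho (Suc n)\<bar> * sup_on al1 om1 (P (Suc n))"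
    by (intro mult_left_mono sup_on_ge assms) auto
  moreover have "0 \<le> \<bar>rho (Suc n)\<bar> * sup_on al1 om1 (P (Suc n))" using a by simp
  ultimately show ?thesis unfolding abs_mult
    by (intro mult_mono sup_on_ge assms) auto
qed

lemma S_summable:
  assumes "x \<in> {al1..om1}" "y \<in> {al2..om2}"
  shows "summable (\<lambda>n. rho (Suc n) * poly (P (Suc n)) x * poly (Q (Suc n)) y)"
    "\<bar>\<Sum>n. rho (Suc n) * poly (P (Suc n)) x * poly (Q (Suc n)) y\<bar> \<le> 1"
proof -
  let ?t = "\<lambda>n. rho (Suc n) * poly (P (Suc n)) x * poly (Q (Suc n)) y"
  have sa: "summable (\<lambda>n. \<bar>?t n\<bar>)"
    by (rule summable_comparison_test'[OF K_summable, of 0]) (use t_bound[OF assms] in auto)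
  then show "summable ?t" by (rule summable_rabs_cancel)
  have "\<bar>suminf ?t\<bar> \<le> (\<Sum>n. \<bar>?t n\<bar>)" by (rule summable_rabs[OF sa])
  also have "\<dots> \<le> suminf K" by (rule suminf_le[OF _ sa K_summable]) (use t_bound[OF assms] in auto)
  finally show "\<bar>suminf ?t\<bar> \<le> 1" using K_le by linarith
qed

lemma biv_nonneg: "0 \<le> biv_density f1 f2 al1 om1 al2 om2 P Q rho x y"
proof (cases "x \<in> {al1..om1} \<and> y \<in> {al2..om2}")
  case True
  then have "0 \<le> 1 + (\<Sum>n. rho (Suc n) * poly (P (Suc n)) x * poly (Q (Suc n)) y)"
    using S_summable(2)[of x y] by auto
  then show ?thesis using True bdd_densityD(3)[OF d1] bdd_densityD(3)[OF d2]
    unfolding biv_density_def by simp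
qed (auto simp: biv_density_def)

end




context biv begin

lemma core:
  fixes M :: "'a measure" and X Y :: "'a \<Rightarrow> real" and u v :: "real \<Rightarrow> real"
  assumes dist: "distributed M (lborel \<Otimes>\<^sub>M lborel) (\<lambda>w. (X w, Y w))
            (\<lambda>(x, y). ennreal (biv_density f1 f2 al1 om1 al2 om2 P Q rho x y))"
    and um[measurable]: "u \<in> borel_measurable borel" and vm[measurable]: "v \<in> borel_measurable borel"
    and ub: "\<And>x. x \<in> {al1..om1} \<Longrightarrow> \<bar>u x\<bar> \<le> Cu" and vb: "\<And>y. y \<in> {al2..om2} \<Longrightarrow> \<bar>v y\<bar> \<le> Cv"
  shows "integrable M (\<lambda>w. u (X w) * v (Y w))"
   "(\<integral>w. u (X w) * v (Y w) \<partial>M) = (\<integral>x. f1 x * u x \<partial>lborel) * (\<integral>y. f2 y * v y \<partial>lborel) +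
      (\<Sum>n. rho (Suc n) * (\<integral>x. f1 x * (poly (P (Suc n)) x * u x) \<partial>lborel) * (\<integral>y. f2 y * (poly (Q (Suc n)) y * v y) \<partial>lborel))"
proof -
  define F where "F = (\<lambda>z. biv_density f1 f2 al1 om1 al2 om2 P Q rho (fst z) (snd z))"
  have distF: "distributed M (lborel \<Otimes>\<^sub>M lborel) (\<lambda>w. (X w, Y w)) (\<lambda>z. ennreal (F z))"
  proof -
    have "(\<lambda>(x, y). ennreal (biv_density f1 f2 al1 om1 al2 om2 P Q rho x y)) = (\<lambda>z. ennreal (F z))"
      by (auto simp: F_def fun_eq_iff)
    then show ?thesis using dist by simp
  qed
  have F0: "\<And>z. 0 \<le> F z" unfolding F_def by (rule biv_nonneg)
  note D1 = bdd_densityD[OF d1] and D2 = bdd_densityD[OF d2]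
  define c where "c = (\<lambda>n. sup_on al1 om1 (P n))"
  define d where "d = (\<lambda>n. sup_on al2 om2 (Q n))"
  define A where "A = (\<lambda>n x. f1 x * (poly (P (Suc n)) x * u x))"
  define B where "B = (\<lambda>n y. f2 y * (poly (Q (Suc n)) y * v y))"
  define g where "g = (\<lambda>n z. (rho (Suc n) * A n (fst z)) * B n (snd z))"
  have c0: "0 \<le> c n" "0 \<le> d n" for n unfolding c_def d_def
    using sup_on_nonneg D1(1) D2(1) by (simp_all add: less_imp_le)
  have ubP: "\<bar>poly (P (Suc n)) x * u x\<bar> \<le> c (Suc n) * Cu" if "x \<in> {al1..om1}" for n x
  proof -
    have "\<bar>poly (P (Suc n)) x\<bar> \<le> c (Suc n)" using sup_on_ge[OF that, of "P (Suc n)"] by (simp add: c_def)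
    then show ?thesis unfolding abs_mult using ub[OF that] c0(1)[of "Suc n"] by (intro mult_mono) auto
  qed
  have vbQ: "\<bar>poly (Q (Suc n)) y * v y\<bar> \<le> d (Suc n) * Cv" if "y \<in> {al2..om2}" for n y
  proof -
    have "\<bar>poly (Q (Suc n)) y\<bar> \<le> d (Suc n)" using sup_on_ge[OF that, of "Q (Suc n)"] by (simp add: d_def)
    then show ?thesis unfolding abs_mult using vb[OF that] c0(2)[of "Suc n"] by (intro mult_mono) auto
  qed
  have DA: "integrable lborel (A n)" "\<bar>A n x\<bar> \<le> c (Suc n) * Cu * f1 x" "(\<integral>x. \<bar>A n x\<bar> \<partial>lborel) \<le> c (Suc n) * Cu" for n x
  proof -
    have m: "(\<lambda>x. poly (P (Suc n)) x * u x) \<in> borel_measurable borel" by measurable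
    note R = dens_bound[OF d1 m ubP]
    show "integrable lborel (A n)" using R(1) by (simp add: A_def)
    show "\<bar>A n x\<bar> \<le> c (Suc n) * Cu * f1 x" using R(2)[of x] by (simp add: A_def)
    show "(\<integral>x. \<bar>A n x\<bar> \<partial>lborel) \<le> c (Suc n) * Cu" using R(3) by (simp add: A_def)
  qed
  have DB: "integrable lborel (B n)" "\<bar>B n y\<bar> \<le> d (Suc n) * Cv * f2 y" "(\<integral>y. \<bar>B n y\<bar> \<partial>lborel) \<le> d (Suc n) * Cv" for n y
  proof -
    have m: "(\<lambda>y. poly (Q (Suc n)) y * v y) \<in> borel_measurable borel" by measurable
    note R = dens_bound[OF d2 m vbQ]
    show "integrable lborel (B n)" using R(1) by (simp add: B_def)
    show "\<bar>B n y\<bar> \<le> d (Suc n) * Cv * f2 y" using R(2)[of y] by (simp add: B_def)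
    show "(\<integral>y. \<bar>B n y\<bar> \<partial>lborel) \<le> d (Suc n) * Cv" using R(3) by (simp add: B_def)
  qed
  note Ai = DA(1) and Bi = DB(1) and Ab = DA(2) and Bb = DB(2) and Aib = DA(3) and Bib = DB(3)
  have K: "K n = \<bar>rho (Suc n)\<bar> * c (Suc n) * d (Suc n)" for n by (simp add: c_def d_def)
  have Cu0: "0 \<le> Cu" using ub[of al1] D1(1) by auto
  have Cv0: "0 \<le> Cv" using vb[of al2] D2(1) by auto
  have gi: "integrable (lborel \<Otimes>\<^sub>M lborel) (g n)" for n
    unfolding g_def by (rule sep_prod(1)) (use Ai Bi in auto)
  have gI: "(\<integral>z. g n z \<partial>(lborel \<Otimes>\<^sub>M lborel)) = rho (Suc n) * (\<integral>x. A n x \<partial>lborel) * (\<integral>y. B n y \<partial>lborel)" for n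
    unfolding g_def by (subst sep_prod(2)) (use Ai Bi in auto)
  have gnI: "(\<integral>z. norm (g n z) \<partial>(lborel \<Otimes>\<^sub>M lborel)) = \<bar>rho (Suc n)\<bar> * (\<integral>x. \<bar>A n x\<bar> \<partial>lborel) * (\<integral>y. \<bar>B n y\<bar> \<partial>lborel)" for n
  proof -
    have "(\<lambda>z. norm (g n z)) = (\<lambda>z. (\<bar>rho (Suc n)\<bar> * \<bar>A n (fst z)\<bar>) * \<bar>B n (snd z)\<bar>)"
      by (auto simp: g_def abs_mult fun_eq_iff)
    then show ?thesis by (simp, subst sep_prod(2)) (use Ai Bi in auto)
  qed
  have gnb: "norm (\<integral>z. norm (g n z) \<partial>(lborel \<Otimes>\<^sub>M lborel)) \<le> K n * (Cu * Cv)" for n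
  proof -
    have "\<bar>rho (Suc n)\<bar> * (\<integral>x. \<bar>A n x\<bar> \<partial>lborel) * (\<integral>y. \<bar>B n y\<bar> \<partial>lborel) \<le>
          \<bar>rho (Suc n)\<bar> * (c (Suc n) * Cu) * (d (Suc n) * Cv)"
      using Aib[of n] Bib[of n] c0 Cu0 Cv0
      by (intro mult_mono mult_left_mono) (auto intro!: integral_nonneg_AE mult_nonneg_nonneg)
    moreover have "0 \<le> (\<integral>z. norm (g n z) \<partial>(lborel \<Otimes>\<^sub>M lborel))" by simp
    ultimately show ?thesis unfolding gnI K by (simp add: mult_ac)
  qed
  have sum_int: "summable (\<lambda>n. \<integral>z. norm (g n z) \<partial>(lborel \<Otimes>\<^sub>M lborel))"
    by (rule summable_comparison_test'[OF summable_mult2[OF K_summable], of 0]) (use gnb in auto)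
  have sum_pt: "summable (\<lambda>n. norm (g n z))" for z
  proof (rule summable_comparison_test'[OF summable_mult2[OF K_summable, of "Cu * Cv * (f1 (fst z) * f2 (snd z))"], of 0])
    fix n
    have "norm (g n z) = \<bar>rho (Suc n)\<bar> * \<bar>A n (fst z)\<bar> * \<bar>B n (snd z)\<bar>" by (simp add: g_def abs_mult)
    also have "\<dots> \<le> \<bar>rho (Suc n)\<bar> * (c (Suc n) * Cu * f1 (fst z)) * (d (Suc n) * Cv * f2 (snd z))"
      using Ab Bb c0 Cu0 Cv0 D1(3) D2(3) by (intro mult_mono mult_left_mono) (auto intro!: mult_nonneg_nonneg)
    also have "\<dots> = K n * (Cu * Cv * (f1 (fst z) * f2 (snd z)))" by (simp add: c_def d_def mult_ac)
    finally show "norm (norm (g n z)) \<le> K n * (Cu * Cv * (f1 (fst z) * f2 (snd z)))" by simp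
  qed
  have Si: "integrable (lborel \<Otimes>\<^sub>M lborel) (\<lambda>z. \<Sum>n. g n z)"
    by (rule integrable_suminf[OF gi AE_I2[OF sum_pt] sum_int])
  have SI: "(\<integral>z. (\<Sum>n. g n z) \<partial>(lborel \<Otimes>\<^sub>M lborel)) = (\<Sum>n. \<integral>z. g n z \<partial>(lborel \<Otimes>\<^sub>M lborel))"
    by (rule integral_suminf[OF gi AE_I2[OF sum_pt] sum_int])
  have a0i: "integrable lborel (\<lambda>x. f1 x * u x)" by (rule dens_bound(1)[OF d1 um ub])
  have b0i: "integrable lborel (\<lambda>x. f2 x * v x)" by (rule dens_bound(1)[OF d2 vm vb])
  have Li: "integrable (lborel \<Otimes>\<^sub>M lborel) (\<lambda>z. (f1 (fst z) * u (fst z)) * (f2 (snd z) * v (snd z)))"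
    by (rule sep_prod(1)[OF a0i b0i])
  have LI: "(\<integral>z. (f1 (fst z) * u (fst z)) * (f2 (snd z) * v (snd z)) \<partial>(lborel \<Otimes>\<^sub>M lborel)) =
      (\<integral>x. f1 x * u x \<partial>lborel) * (\<integral>y. f2 y * v y \<partial>lborel)"
    by (rule sep_prod(2)[OF a0i b0i])
  have pw: "F z * (u (fst z) * v (snd z)) = (f1 (fst z) * u (fst z)) * (f2 (snd z) * v (snd z)) + (\<Sum>n. g n z)" for z
  proof (cases z)
    case (Pair x y)
    show ?thesis
    proof (cases "x \<in> {al1..om1} \<and> y \<in> {al2..om2}")
      case True
      let ?t = "\<lambda>n. rho (Suc n) * poly (P (Suc n)) x * poly (Q (Suc n)) y"
      have st: "summable ?t" using S_summable(1)[of x y] True by auto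
      have "(\<Sum>n. g n z) = (\<Sum>n. (f1 x * u x * (f2 y * v y)) * ?t n)"
        by (simp add: g_def A_def B_def Pair mult_ac)
      also have "\<dots> = (f1 x * u x * (f2 y * v y)) * suminf ?t" by (rule suminf_mult[OF st])
      finally show ?thesis using True by (simp add: F_def Pair biv_density_def algebra_simps)
    next
      case False
      then have "f1 x = 0 \<or> f2 y = 0" using D1(4) D2(4) by auto
      then have "\<And>n. g n z = 0" by (auto simp: g_def A_def B_def Pair)
      then show ?thesis using False \<open>f1 x = 0 \<or> f2 y = 0\<close> by (auto simp: F_def Pair biv_density_def)
    qed
  qed
  have Fi: "integrable (lborel \<Otimes>\<^sub>M lborel) (\<lambda>z. F z * (u (fst z) * v (snd z)))"
    unfolding pw using Li Si by (rule Bochner_Integration.integrable_add)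
  have FI: "(\<integral>z. F z * (u (fst z) * v (snd z)) \<partial>(lborel \<Otimes>\<^sub>M lborel)) =
     (\<integral>x. f1 x * u x \<partial>lborel) * (\<integral>y. f2 y * v y \<partial>lborel) +
      (\<Sum>n. rho (Suc n) * (\<integral>x. A n x \<partial>lborel) * (\<integral>y. B n y \<partial>lborel))"
    unfolding pw by (subst Bochner_Integration.integral_add[OF Li Si]) (simp add: LI SI gI)
  have gm: "(\<lambda>z. u (fst z) * v (snd z)) \<in> borel_measurable (lborel \<Otimes>\<^sub>M lborel)" by measurable
  show "integrable M (\<lambda>w. u (X w) * v (Y w))"
    using distributed_integrable[OF distF gm] F0 Fi by simp
  show "(\<integral>w. u (X w) * v (Y w) \<partial>M) = (\<integral>x. f1 x * u x \<partial>lborel) * (\<integral>y. f2 y * v y \<partial>lborel) +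
      (\<Sum>n. rho (Suc n) * (\<integral>x. f1 x * (poly (P (Suc n)) x * u x) \<partial>lborel) * (\<integral>y. f2 y * (poly (Q (Suc n)) y * v y) \<partial>lborel))"
    using distributed_integral[OF distF gm] F0 FI by (simp add: A_def B_def)
qed

end




lemma ortho_facts:
  assumes o: "orthonormal_polys g P" and d: "bdd_density g al om"
  shows of_int: "integrable lborel (\<lambda>x. g x * (poly (P m) x * poly (P n) x))"
    and of_a: "(\<integral>x. g x * (poly (P m) x * poly (P n) x) \<partial>lborel) = (if m = n then 1 else 0)"
    and of_b: "(\<integral>x. g x * poly (P n) x \<partial>lborel) = (if n = 0 then 1 else 0)"
    and of_e: "(\<integral>x. g x * (poly (P n) x * x) \<partial>lborel) =
       (if n = 1 then 1 / coeff (P 1) 1 else if n = 0 then - coeff (P 1) 0 / coeff (P 1) 1 else 0)"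
    and of_d: "(\<integral>x. g x * x \<partial>lborel) = - coeff (P 1) 0 / coeff (P 1) 1"
proof -
  note O = ortho_int[OF o]
  have eq: "\<And>m n. (\<lambda>x. g x * (poly (P m) x * poly (P n) x)) = (\<lambda>x. poly (P m) x * poly (P n) x * g x)"
    by (auto simp: mult_ac)
  show i: "integrable lborel (\<lambda>x. g x * (poly (P m) x * poly (P n) x))" for m n
    unfolding eq by (rule O(1))
  show a: "(\<integral>x. g x * (poly (P m) x * poly (P n) x) \<partial>lborel) = (if m = n then 1 else 0)" for m n
    unfolding eq by (rule O(2))
  have P0: "\<And>x. poly (P 0) x = 1" by (rule ortho_P0[OF o d])
  show "(\<integral>x. g x * poly (P n) x \<partial>lborel) = (if n = 0 then 1 else 0)"
    using a[of n 0] by (simp add: P0)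
  define p0 where "p0 = coeff (P 1) 0"
  define p1 where "p1 = coeff (P 1) 1"
  have p1: "p1 > 0" unfolding p1_def by (rule ortho_P1(2)[OF o])
  have P1: "\<And>x. poly (P 1) x = p0 + p1 * x" unfolding p0_def p1_def by (rule ortho_P1(1)[OF o])
  have e: "(\<integral>x. g x * (poly (P n) x * x) \<partial>lborel) =
       (if n = 1 then 1 / p1 else if n = 0 then - p0 / p1 else 0)" for n
  proof -
    have eqf: "(\<lambda>x. g x * (poly (P n) x * x)) = (\<lambda>x. (1/p1) * (g x * (poly (P n) x * poly (P 1) x)) - (p0/p1) * (g x * (poly (P n) x * poly (P 0) x)))"
      unfolding P0 P1 using p1 by (auto simp: fun_eq_iff field_simps)
    have "(\<integral>x. g x * (poly (P n) x * x) \<partial>lborel) = (\<integral>x. (1/p1) * (g x * (poly (P n) x * poly (P 1) x)) - (p0/p1) * (g x * (poly (P n) x * poly (P 0) x)) \<partial>lborel)"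
      by (simp only: eqf)
    also have "\<dots> = (\<integral>x. (1/p1) * (g x * (poly (P n) x * poly (P 1) x)) \<partial>lborel) - (\<integral>x. (p0/p1) * (g x * (poly (P n) x * poly (P 0) x)) \<partial>lborel)"
      by (rule Bochner_Integration.integral_diff) (intro integrable_mult_right i)+
    also have "\<dots> = (1/p1) * (\<integral>x. g x * (poly (P n) x * poly (P 1) x) \<partial>lborel) - (p0/p1) * (\<integral>x. g x * (poly (P n) x * poly (P 0) x) \<partial>lborel)"
      by (simp only: integral_mult_right_zero)
    also have "\<dots> = (1/p1) * (if n = 1 then 1 else 0) - (p0/p1) * (if n = 0 then 1 else 0)"
      by (simp only: a)
    finally have "(\<integral>x. g x * (poly (P n) x * x) \<partial>lborel) = (1/p1) * (if n = 1 then 1 else 0) - (p0/p1) * (if n = 0 then 1 else 0)" .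
    then show ?thesis by auto
  qed
  then show "(\<integral>x. g x * (poly (P n) x * x) \<partial>lborel) =
       (if n = 1 then 1 / coeff (P 1) 1 else if n = 0 then - coeff (P 1) 0 / coeff (P 1) 1 else 0)"
    unfolding p0_def p1_def .
  show "(\<integral>x. g x * x \<partial>lborel) = - coeff (P 1) 0 / coeff (P 1) 1"
    using e[of 0] by (simp add: P0 p0_def p1_def)
qed

definition coreP :: "(real \<Rightarrow> real) \<Rightarrow> (real \<Rightarrow> real) \<Rightarrow> real \<Rightarrow> real \<Rightarrow> real \<Rightarrow> real \<Rightarrow>
   (nat \<Rightarrow> real poly) \<Rightarrow> (nat \<Rightarrow> real poly) \<Rightarrow> (nat \<Rightarrow> real) \<Rightarrow> 'a measure \<Rightarrow> ('a \<Rightarrow> real) \<Rightarrow> ('a \<Rightarrow> real) \<Rightarrow> bool" where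
  "coreP f1 f2 al1 om1 al2 om2 P Q rho M X Y \<longleftrightarrow> (\<forall>u v Cu Cv. u \<in> borel_measurable borel \<longrightarrow> v \<in> borel_measurable borel \<longrightarrow>
     (\<forall>x\<in>{al1..om1}. \<bar>u x\<bar> \<le> Cu) \<longrightarrow> (\<forall>y\<in>{al2..om2}. \<bar>v y\<bar> \<le> Cv) \<longrightarrow>
     integrable M (\<lambda>w. u (X w) * v (Y w)) \<and>
     (\<integral>w. u (X w) * v (Y w) \<partial>M) = (\<integral>x. f1 x * u x \<partial>lborel) * (\<integral>y. f2 y * v y \<partial>lborel) +
      (\<Sum>n. rho (Suc n) * (\<integral>x. f1 x * (poly (P (Suc n)) x * u x) \<partial>lborel) * (\<integral>y. f2 y * (poly (Q (Suc n)) y * v y) \<partial>lborel)))"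

context biv begin

lemma coreP_dist:
  assumes "distributed M (lborel \<Otimes>\<^sub>M lborel) (\<lambda>w. (X w, Y w))
            (\<lambda>(x, y). ennreal (biv_density f1 f2 al1 om1 al2 om2 P Q rho x y))"
  shows "coreP f1 f2 al1 om1 al2 om2 P Q rho M X Y"
  unfolding coreP_def
proof (intro allI impI)
  fix u v :: "real \<Rightarrow> real" and Cu Cv
  assume um: "u \<in> borel_measurable borel" and vm: "v \<in> borel_measurable borel"
    and ub: "\<forall>x\<in>{al1..om1}. \<bar>u x\<bar> \<le> Cu" and vb: "\<forall>y\<in>{al2..om2}. \<bar>v y\<bar> \<le> Cv"
  have ub': "\<And>x. x \<in> {al1..om1} \<Longrightarrow> \<bar>u x\<bar> \<le> Cu" using ub by blast
  have vb': "\<And>y. y \<in> {al2..om2} \<Longrightarrow> \<bar>v y\<bar> \<le> Cv" using vb by blast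
  note R = core[OF assms um vm ub' vb']
  show "integrable M (\<lambda>w. u (X w) * v (Y w)) \<and>
     (\<integral>w. u (X w) * v (Y w) \<partial>M) = (\<integral>x. f1 x * u x \<partial>lborel) * (\<integral>y. f2 y * v y \<partial>lborel) +
      (\<Sum>n. rho (Suc n) * (\<integral>x. f1 x * (poly (P (Suc n)) x * u x) \<partial>lborel) * (\<integral>y. f2 y * (poly (Q (Suc n)) y * v y) \<partial>lborel))"
    using R(1) R(2) by (rule conjI)
qed

lemma coreP_swap:
  assumes "coreP f1 f2 al1 om1 al2 om2 P Q rho M X Y"
  shows "coreP f2 f1 al2 om2 al1 om1 Q P rho M Y X"
  unfolding coreP_def
proof (intro allI impI)
  fix u v :: "real \<Rightarrow> real" and Cu Cv
  assume um: "u \<in> borel_measurable borel" and vm: "v \<in> borel_measurable borel"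
    and ub: "\<forall>x\<in>{al2..om2}. \<bar>u x\<bar> \<le> Cu" and vb: "\<forall>y\<in>{al1..om1}. \<bar>v y\<bar> \<le> Cv"
  have ub': "\<And>x. x \<in> {al2..om2} \<Longrightarrow> \<bar>u x\<bar> \<le> Cu" using ub by blast
  have vb': "\<And>y. y \<in> {al1..om1} \<Longrightarrow> \<bar>v y\<bar> \<le> Cv" using vb by blast
  note R0 = assms[unfolded coreP_def, rule_format, OF vm um vb' ub']
  note R1 = conjunct1[OF R0] and R = conjunct2[OF R0]
  have e: "(\<lambda>w. u (Y w) * v (X w)) = (\<lambda>w. v (X w) * u (Y w))" by (auto simp: mult_ac)
  show "integrable M (\<lambda>w. u (Y w) * v (X w)) \<and>
    (\<integral>w. u (Y w) * v (X w) \<partial>M) = (\<integral>x. f2 x * u x \<partial>lborel) * (\<integral>y. f1 y * v y \<partial>lborel) +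
      (\<Sum>n. rho (Suc n) * (\<integral>x. f2 x * (poly (Q (Suc n)) x * u x) \<partial>lborel) * (\<integral>y. f1 y * (poly (P (Suc n)) y * v y) \<partial>lborel))"
  proof
    show "integrable M (\<lambda>w. u (Y w) * v (X w))" unfolding e by (rule R1)
    have s: "(\<lambda>n. rho (Suc n) * (\<integral>x. f2 x * (poly (Q (Suc n)) x * u x) \<partial>lborel) * (\<integral>y. f1 y * (poly (P (Suc n)) y * v y) \<partial>lborel))
       = (\<lambda>n. rho (Suc n) * (\<integral>x. f1 x * (poly (P (Suc n)) x * v x) \<partial>lborel) * (\<integral>y. f2 y * (poly (Q (Suc n)) y * u y) \<partial>lborel))"
      by (rule ext) (simp only: mult_ac)
    have "(\<integral>w. u (Y w) * v (X w) \<partial>M) = (\<integral>w. v (X w) * u (Y w) \<partial>M)" unfolding e ..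
    also have "\<dots> = (\<integral>x. f1 x * v x \<partial>lborel) * (\<integral>y. f2 y * u y \<partial>lborel) +
      (\<Sum>n. rho (Suc n) * (\<integral>x. f1 x * (poly (P (Suc n)) x * v x) \<partial>lborel) * (\<integral>y. f2 y * (poly (Q (Suc n)) y * u y) \<partial>lborel))"
      by (rule R)
    finally show "(\<integral>w. u (Y w) * v (X w) \<partial>M) = (\<integral>x. f2 x * u x \<partial>lborel) * (\<integral>y. f1 y * v y \<partial>lborel) +
      (\<Sum>n. rho (Suc n) * (\<integral>x. f2 x * (poly (Q (Suc n)) x * u x) \<partial>lborel) * (\<integral>y. f1 y * (poly (P (Suc n)) y * v y) \<partial>lborel))"
      unfolding s by (simp only: mult_ac)
  qed
qed

end




lemma coreP_use:
  assumes "coreP f1 f2 al1 om1 al2 om2 P Q rho M X Y"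
    and "u \<in> borel_measurable borel" "v \<in> borel_measurable borel"
    and "\<forall>x\<in>{al1..om1}. \<bar>u x\<bar> \<le> Cu" "\<forall>y\<in>{al2..om2}. \<bar>v y\<bar> \<le> Cv"
  shows "integrable M (\<lambda>w. u (X w) * v (Y w))"
    "(\<integral>w. u (X w) * v (Y w) \<partial>M) = (\<integral>x. f1 x * u x \<partial>lborel) * (\<integral>y. f2 y * v y \<partial>lborel) +
      (\<Sum>n. rho (Suc n) * (\<integral>x. f1 x * (poly (P (Suc n)) x * u x) \<partial>lborel) * (\<integral>y. f2 y * (poly (Q (Suc n)) y * v y) \<partial>lborel))"
proof -
  have H: "\<forall>u v Cu Cv. u \<in> borel_measurable borel \<longrightarrow> v \<in> borel_measurable borel \<longrightarrow>
     (\<forall>x\<in>{al1..om1}. \<bar>u x\<bar> \<le> Cu) \<longrightarrow> (\<forall>y\<in>{al2..om2}. \<bar>v y\<bar> \<le> Cv) \<longrightarrow>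
     integrable M (\<lambda>w. u (X w) * v (Y w)) \<and>
     (\<integral>w. u (X w) * v (Y w) \<partial>M) = (\<integral>x. f1 x * u x \<partial>lborel) * (\<integral>y. f2 y * v y \<partial>lborel) +
      (\<Sum>n. rho (Suc n) * (\<integral>x. f1 x * (poly (P (Suc n)) x * u x) \<partial>lborel) * (\<integral>y. f2 y * (poly (Q (Suc n)) y * v y) \<partial>lborel))"
    using assms(1) unfolding coreP_def .
  note H1 = H[THEN spec[of _ u], THEN spec[of _ v], THEN spec[of _ Cu], THEN spec[of _ Cv]]
  note R = mp[OF mp[OF mp[OF mp[OF H1 assms(2)] assms(3)] assms(4)] assms(5)]
  show "integrable M (\<lambda>w. u (X w) * v (Y w))" using R by (rule conjunct1)
  show "(\<integral>w. u (X w) * v (Y w) \<partial>M) = (\<integral>x. f1 x * u x \<partial>lborel) * (\<integral>y. f2 y * v y \<partial>lborel) +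
      (\<Sum>n. rho (Suc n) * (\<integral>x. f1 x * (poly (P (Suc n)) x * u x) \<partial>lborel) * (\<integral>y. f2 y * (poly (Q (Suc n)) y * v y) \<partial>lborel))"
    using R by (rule conjunct2)
qed

lemma sum_delta: "(\<Sum>n. r (Suc n) * (if Suc n = j then 1 else 0) * (if Suc n = k then 1 else 0)) = (if j = k \<and> j \<noteq> 0 then r j else (0::real))"
proof -
  have eq: "(\<lambda>n. r (Suc n) * (if Suc n = j then 1 else 0) * (if Suc n = k then 1 else 0)) =
     (\<lambda>n. if n = j - 1 then (\<lambda>_. if j = k \<and> j \<noteq> 0 then r j else 0) n else 0)"
    by (auto simp: fun_eq_iff)
  show ?thesis unfolding eq by (rule sums_unique[OF sums_single, symmetric])
qed

lemma sum_single0: "(\<Sum>n. if n = 0 then (c::real) else 0) = c"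
  using sums_unique[OF sums_single[of 0 "\<lambda>_. c"]] by simp

context biv begin

lemma EPQ:
  assumes C: "coreP f1 f2 al1 om1 al2 om2 P Q rho M X Y"
  shows "integrable M (\<lambda>w. poly (P j) (X w) * poly (Q k) (Y w))"
    "(\<integral>w. poly (P j) (X w) * poly (Q k) (Y w) \<partial>M) = (if j = k then (if j = 0 then 1 else rho j) else 0)"
proof -
  have b1: "\<forall>x\<in>{al1..om1}. \<bar>poly (P j) x\<bar> \<le> sup_on al1 om1 (P j)" using sup_on_ge by blast
  have b2: "\<forall>y\<in>{al2..om2}. \<bar>poly (Q k) y\<bar> \<le> sup_on al2 om2 (Q k)" using sup_on_ge by blast
  note R = coreP_use[OF C poly_meas poly_meas b1 b2]
  show "integrable M (\<lambda>w. poly (P j) (X w) * poly (Q k) (Y w))" by (rule R(1))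
  have "(\<integral>w. poly (P j) (X w) * poly (Q k) (Y w) \<partial>M) = (if j = 0 then 1 else 0) * (if k = 0 then 1 else 0) +
     (\<Sum>n. rho (Suc n) * (if Suc n = j then 1 else 0) * (if Suc n = k then 1 else 0))"
    apply (subst R(2))
    apply (simp add: of_b[OF o1 d1] of_b[OF o2 d2] of_a[OF o1 d1] of_a[OF o2 d2])
    done
  also have "\<dots> = (if j = k then (if j = 0 then 1 else rho j) else 0)"
    unfolding sum_delta by auto
  finally show "(\<integral>w. poly (P j) (X w) * poly (Q k) (Y w) \<partial>M) = (if j = k then (if j = 0 then 1 else rho j) else 0)" .
qed

lemma EPP:
  assumes C: "coreP f1 f2 al1 om1 al2 om2 P Q rho M X Y"
  shows "integrable M (\<lambda>w. poly (P j) (X w) * poly (P k) (X w))"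
    "(\<integral>w. poly (P j) (X w) * poly (P k) (X w) \<partial>M) = (if j = k then 1 else 0)"
proof -
  have b0: "\<bar>poly (P j) x * poly (P k) x\<bar> \<le> sup_on al1 om1 (P j) * sup_on al1 om1 (P k)" if "x \<in> {al1..om1}" for x
    unfolding abs_mult using sup_on_ge[OF that] sup_on_nonneg bdd_densityD(1)[OF d1]
    by (intro mult_mono) (auto simp: less_imp_le)
  then have b: "\<forall>x\<in>{al1..om1}. \<bar>poly (P j) x * poly (P k) x\<bar> \<le> sup_on al1 om1 (P j) * sup_on al1 om1 (P k)" by blast
  have b1: "\<forall>y\<in>{al2..om2}. \<bar>(\<lambda>_. 1::real) y\<bar> \<le> 1" by simp
  have m1: "(\<lambda>x. poly (P j) x * poly (P k) x) \<in> borel_measurable borel" by measurable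
  have m2: "(\<lambda>_. 1::real) \<in> borel_measurable borel" by simp
  note R = coreP_use[OF C m1 m2 b b1]
  have e: "(\<lambda>w. poly (P j) (X w) * poly (P k) (X w) * 1) = (\<lambda>w. poly (P j) (X w) * poly (P k) (X w))" by simp
  show "integrable M (\<lambda>w. poly (P j) (X w) * poly (P k) (X w))" using R(1) unfolding e by simp
  have z: "(\<integral>y. f2 y * (poly (Q (Suc n)) y * 1) \<partial>lborel) = 0" for n using of_b[OF o2 d2, of "Suc n"] by simp
  have "(\<integral>w. poly (P j) (X w) * poly (P k) (X w) \<partial>M) = (\<integral>w. poly (P j) (X w) * poly (P k) (X w) * 1 \<partial>M)" by simp
  also have "\<dots> = (if j = k then 1 else 0) * 1"
    unfolding R(2) z of_a[OF o1 d1] by (simp add: bdd_densityD(6)[OF d2])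
  finally show "(\<integral>w. poly (P j) (X w) * poly (P k) (X w) \<partial>M) = (if j = k then 1 else 0)" by simp
qed

end




context biv begin

lemma condexp:
  fixes M :: "'a measure" and X Y :: "'a \<Rightarrow> real"
  assumes PS: "prob_space M" and Xm[measurable]: "X \<in> borel_measurable M" and Ym[measurable]: "Y \<in> borel_measurable M"
    and C: "coreP f1 f2 al1 om1 al2 om2 P Q rho M X Y"
  shows "AE w in M. real_cond_exp M (vimage_algebra (space M) Y borel) X w =
      (rho 1 * coeff (Q 1) 1 / coeff (P 1) 1) * Y w + (rho 1 * coeff (Q 1) 0 - coeff (P 1) 0) / coeff (P 1) 1"
proof -
  interpret PS: prob_space M by (rule PS)
  define Fa where "Fa = vimage_algebra (space M) Y borel"
  define p0 where "p0 = coeff (P 1) 0"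
  define p1 where "p1 = coeff (P 1) 1"
  define q0 where "q0 = coeff (Q 1) 0"
  define q1 where "q1 = coeff (Q 1) 1"
  define a1 where "a1 = rho 1 * q1 / p1"
  define a0 where "a0 = (rho 1 * q0 - p0) / p1"
  have p1: "p1 > 0" unfolding p1_def by (rule ortho_P1(2)[OF o1])
  have Q1: "\<And>y. poly (Q 1) y = q0 + q1 * y" unfolding q0_def q1_def by (rule ortho_P1(1)[OF o2])
  have Yf: "Y \<in> space M \<rightarrow> space borel" by simp
  have sFa: "sets Fa = {Y -` A \<inter> space M | A. A \<in> sets borel}"
    unfolding Fa_def by (rule sets_vimage_algebra2[OF Yf])
  have subalg: "subalgebra M Fa"
    unfolding subalgebra_def
  proof
    show "sets Fa \<subseteq> sets M" unfolding sFa using measurable_sets[OF Ym] by auto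
    show "space Fa = space M" unfolding Fa_def by simp
  qed
  interpret S: finite_measure_subalgebra M Fa
    by (intro finite_measure_subalgebra.intro finite_measure_subalgebra_axioms.intro
        PS.finite_measure_axioms subalg)
  have YFa[measurable]: "Y \<in> borel_measurable Fa" unfolding Fa_def by (rule measurable_vimage_algebra1[OF Yf])
  define G where "G = (\<lambda>w. a1 * Y w + a0)"
  have Gm: "G \<in> borel_measurable Fa" unfolding G_def by measurable
  have one_b: "\<forall>x\<in>{al1..om1}. \<bar>(\<lambda>_. 1::real) x\<bar> \<le> 1" by simp
  have one_b2: "\<forall>x\<in>{al2..om2}. \<bar>(\<lambda>_. 1::real) x\<bar> \<le> 1" by simp
  have id_b: "\<forall>x\<in>{al1..om1}. \<bar>(\<lambda>x. x) x\<bar> \<le> \<bar>al1\<bar> + \<bar>om1\<bar>" by (auto split: abs_split)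
  have lin_b: "\<forall>y\<in>{al2..om2}. \<bar>(\<lambda>y. a1 * y + a0) y\<bar> \<le> \<bar>a1\<bar> * (\<bar>al2\<bar> + \<bar>om2\<bar>) + \<bar>a0\<bar>"
  proof
    fix y assume y: "y \<in> {al2..om2}"
    have "\<bar>y\<bar> \<le> \<bar>al2\<bar> + \<bar>om2\<bar>" using y by (auto split: abs_split)
    then have "\<bar>a1 * y\<bar> \<le> \<bar>a1\<bar> * (\<bar>al2\<bar> + \<bar>om2\<bar>)" unfolding abs_mult by (intro mult_left_mono) auto
    then show "\<bar>(\<lambda>y. a1 * y + a0) y\<bar> \<le> \<bar>a1\<bar> * (\<bar>al2\<bar> + \<bar>om2\<bar>) + \<bar>a0\<bar>" by simp
  qed
  have idm: "(\<lambda>x. x::real) \<in> borel_measurable borel" by simp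
  have onem: "(\<lambda>_. 1::real) \<in> borel_measurable borel" by simp
  have linm: "(\<lambda>y. a1 * y + a0) \<in> borel_measurable borel" by measurable
  have intX: "integrable M X"
    using coreP_use(1)[OF C idm onem id_b one_b2] by simp
  have intG: "integrable M G"
    using coreP_use(1)[OF C onem linm one_b lin_b] by (simp add: G_def)
  have ex: "(\<lambda>n. rho (Suc n) * (\<integral>x. f1 x * (poly (P (Suc n)) x * x) \<partial>lborel) * J n) =
        (\<lambda>n. if n = 0 then rho 1 * (1 / p1) * J 0 else 0)" for J
    by (auto simp: fun_eq_iff of_e[OF o1 d1] p1_def)
  have setint: "(\<integral> w \<in> A. X w \<partial>M) = (\<integral> w \<in> A. G w \<partial>M)" if A: "A \<in> sets Fa" for A
  proof -
    obtain B where B: "B \<in> sets borel" and AB: "A = Y -` B \<inter> space M" using A unfolding sFa by auto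
    have Bm: "indicator B \<in> borel_measurable borel" using B by simp
    have Bb: "\<forall>y\<in>{al2..om2}. \<bar>indicator B y :: real\<bar> \<le> 1" by (simp add: indicator_def)
    have vm: "(\<lambda>y. indicator B y * (a1 * y + a0)) \<in> borel_measurable borel" using B by measurable
    have vb: "\<forall>y\<in>{al2..om2}. \<bar>indicator B y * (a1 * y + a0)\<bar> \<le> \<bar>a1\<bar> * (\<bar>al2\<bar> + \<bar>om2\<bar>) + \<bar>a0\<bar>"
    proof
      fix y assume y: "y \<in> {al2..om2}"
      have h1: "\<bar>indicator B y * (a1 * y + a0)\<bar> \<le> \<bar>a1 * y + a0\<bar>" by (simp add: indicator_def abs_mult)
      have h2: "\<bar>a1 * y + a0\<bar> \<le> \<bar>a1\<bar> * (\<bar>al2\<bar> + \<bar>om2\<bar>) + \<bar>a0\<bar>" using lin_b y by simp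
      from h1 h2 show "\<bar>indicator B y * (a1 * y + a0)\<bar> \<le> \<bar>a1\<bar> * (\<bar>al2\<bar> + \<bar>om2\<bar>) + \<bar>a0\<bar>"
        by linarith
    qed
    define J where "J = (\<lambda>n. \<integral>y. f2 y * (poly (Q (Suc n)) y * indicator B y) \<partial>lborel)"
    define I where "I = (\<integral>y. f2 y * indicator B y \<partial>lborel)"
    have L: "(\<integral> w \<in> A. X w \<partial>M) = (\<integral>w. X w * indicator B (Y w) \<partial>M)"
      unfolding set_lebesgue_integral_def AB
      by (intro Bochner_Integration.integral_cong) (auto simp: indicator_def)
    also have "\<dots> = (- p0 / p1) * I + rho 1 * (1 / p1) * J 0"
      using coreP_use(2)[OF C idm Bm id_b Bb]
      by (simp add: ex[of J, unfolded J_def] of_d[OF o1 d1] p0_def p1_def I_def J_def sum_single0)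
    finally have L: "(\<integral> w \<in> A. X w \<partial>M) = (- p0 / p1) * I + rho 1 * (1 / p1) * J 0" .
    have R: "(\<integral> w \<in> A. G w \<partial>M) = (\<integral>w. 1 * (indicator B (Y w) * (a1 * Y w + a0)) \<partial>M)"
      unfolding set_lebesgue_integral_def AB G_def
      by (intro Bochner_Integration.integral_cong) (auto simp: indicator_def)
    also have "\<dots> = (\<integral>y. f2 y * (indicator B y * (a1 * y + a0)) \<partial>lborel)"
      using coreP_use(2)[OF C onem vm one_b vb]
      by (simp add: of_b[OF o1 d1] bdd_densityD(6)[OF d1])
    also have "\<dots> = (\<integral>y. (rho 1 / p1) * (f2 y * (poly (Q 1) y * indicator B y)) - (p0 / p1) * (f2 y * indicator B y) \<partial>lborel)"
      unfolding Q1 a1_def a0_def using p1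
      by (intro Bochner_Integration.integral_cong) (auto simp: field_simps indicator_def)
    also have "\<dots> = (rho 1 / p1) * J 0 - (p0 / p1) * I"
    proof -
      have i1: "integrable lborel (\<lambda>y. f2 y * (poly (Q 1) y * indicator B y))"
        by (rule dens_bound(1)[OF d2, of _ "sup_on al2 om2 (Q 1)"]) (use B sup_on_ge sup_on_nonneg[of al2 om2 "Q 1"] bdd_densityD(1)[OF d2] in \<open>auto simp: indicator_def abs_mult\<close>)
      have i2: "integrable lborel (\<lambda>y. f2 y * indicator B y)"
        by (rule dens_bound(1)[OF d2, of _ 1]) (use B in \<open>auto simp: indicator_def\<close>)
      show ?thesis
        by (subst Bochner_Integration.integral_diff) (use i1 i2 in \<open>auto simp: J_def I_def\<close>)
    qed
    finally show ?thesis using L by (simp add: algebra_simps)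
  qed
  have "AE w in M. real_cond_exp M Fa X w = G w"
    by (rule S.real_cond_exp_charact[OF setint intX intG Gm])
  then show ?thesis unfolding Fa_def G_def a1_def a0_def p0_def p1_def q0_def q1_def .
qed

end




context biv begin

lemma K_le1: "K n \<le> 1"
proof -
  have "sum K {n} \<le> suminf K" by (rule sum_le_suminf[OF K_summable]) (auto intro: K_nonneg)
  then show ?thesis using K_le by simp
qed

lemma rho_bound: "\<bar>rho (Suc n)\<bar> \<le> 1"
proof -
  have c: "1 \<le> sup_on al1 om1 (P (Suc n))" by (rule ortho_sup_ge1[OF o1 d1])
  have d: "1 \<le> sup_on al2 om2 (Q (Suc n))" by (rule ortho_sup_ge1[OF o2 d2])
  have "\<bar>rho (Suc n)\<bar> * 1 * 1 \<le> K n"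
    using c d by (intro mult_mono) auto
  then show ?thesis using K_le1[of n] by simp
qed

lemma part1:
  fixes M :: "'a measure" and X Y :: "'a \<Rightarrow> real"
  assumes PS: "prob_space M"
    and dist: "distributed M (lborel \<Otimes>\<^sub>M lborel) (\<lambda>w. (X w, Y w))
            (\<lambda>(x, y). ennreal (biv_density f1 f2 al1 om1 al2 om2 P Q rho x y))"
    and r1: "0 < \<bar>rho 1\<bar>" and r1lt: "\<bar>rho 1\<bar> < (SUP n. \<bar>rho (n + 2)\<bar>)"
  shows "\<exists>a0 a1 b0 b1 :: real. a1 * b1 \<noteq> 0 \<and>
             (AE w in M. real_cond_exp M (vimage_algebra (space M) Y borel) X w = a1 * Y w + a0) \<and>
             (AE w in M. real_cond_exp M (vimage_algebra (space M) X borel) Y w = b1 * X w + b0) \<and>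
             maxcorr M X Y > \<bar>pcorr M X Y\<bar> \<and> \<bar>pcorr M X Y\<bar> > 0"
proof -
  interpret PS: prob_space M by (rule PS)
  interpret B2: biv f2 f1 al2 om2 al1 om1 Q P rho by (rule swap)
  have XYm: "(\<lambda>w. (X w, Y w)) \<in> measurable M (lborel \<Otimes>\<^sub>M lborel)" by (rule distributed_measurable[OF dist])
  then have Xm[measurable]: "X \<in> borel_measurable M" and Ym[measurable]: "Y \<in> borel_measurable M"
    unfolding measurable_pair_iff by (simp_all add: comp_def)
  have C1: "coreP f1 f2 al1 om1 al2 om2 P Q rho M X Y" by (rule coreP_dist[OF dist])
  have C2: "coreP f2 f1 al2 om2 al1 om1 Q P rho M Y X" by (rule coreP_swap[OF C1])
  define p0 where "p0 = coeff (P 1) 0"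
  define p1 where "p1 = coeff (P 1) 1"
  define q0 where "q0 = coeff (Q 1) 0"
  define q1 where "q1 = coeff (Q 1) 1"
  have p1: "p1 > 0" unfolding p1_def by (rule ortho_P1(2)[OF o1])
  have q1: "q1 > 0" unfolding q1_def by (rule ortho_P1(2)[OF o2])
  have P1: "\<And>x. poly (P 1) x = p0 + p1 * x" unfolding p0_def p1_def by (rule ortho_P1(1)[OF o1])
  have Q1: "\<And>y. poly (Q 1) y = q0 + q1 * y" unfolding q0_def q1_def by (rule ortho_P1(1)[OF o2])
  have P0: "\<And>x. poly (P 0) x = 1" by (rule ortho_P0[OF o1 d1])
  have Q0: "\<And>x. poly (Q 0) x = 1" by (rule ortho_P0[OF o2 d2])
  have CE1: "AE w in M. real_cond_exp M (vimage_algebra (space M) Y borel) X w =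
      (rho 1 * q1 / p1) * Y w + (rho 1 * q0 - p0) / p1"
    using condexp[OF PS Xm Ym C1] unfolding p0_def p1_def q0_def q1_def .
  have CE2: "AE w in M. real_cond_exp M (vimage_algebra (space M) X borel) Y w =
      (rho 1 * p1 / q1) * X w + (rho 1 * p0 - q0) / q1"
    using B2.condexp[OF PS Ym Xm C2] unfolding p0_def p1_def q0_def q1_def .
  have a1b1: "(rho 1 * q1 / p1) * (rho 1 * p1 / q1) \<noteq> 0" using p1 q1 r1 by auto
  have EX1: "integrable M (\<lambda>w. poly (P n) (X w))" "(\<integral>w. poly (P n) (X w) \<partial>M) = (if n = 0 then 1 else 0)" for n
    using EPQ[OF C1, of n 0] by (simp_all add: Q0)
  have EY1: "integrable M (\<lambda>w. poly (Q n) (Y w))" "(\<integral>w. poly (Q n) (Y w) \<partial>M) = (if n = 0 then 1 else 0)" for n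
    using B2.EPQ[OF C2, of n 0] by (simp_all add: P0)
  have EXX: "integrable M (\<lambda>w. poly (P j) (X w) * poly (P k) (X w))" "(\<integral>w. poly (P j) (X w) * poly (P k) (X w) \<partial>M) = (if j = k then 1 else 0)" for j k
    using EPP[OF C1, of j k] by simp_all
  have EYY: "integrable M (\<lambda>w. poly (Q j) (Y w) * poly (Q k) (Y w))" "(\<integral>w. poly (Q j) (Y w) * poly (Q k) (Y w) \<partial>M) = (if j = k then 1 else 0)" for j k
    using B2.EPP[OF C2, of j k] by simp_all
  have EXY: "integrable M (\<lambda>w. poly (P j) (X w) * poly (Q k) (Y w))" "(\<integral>w. poly (P j) (X w) * poly (Q k) (Y w) \<partial>M) = (if j = k then (if j = 0 then 1 else rho j) else 0)" for j k
    using EPQ[OF C1, of j k] by simp_all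
  have mX: "mean M X = - p0 / p1"
  proof -
    have "(\<lambda>w. X w) = (\<lambda>w. (1/p1) * poly (P 1) (X w) - p0 / p1)" using p1 unfolding P1 by (auto simp: fun_eq_iff field_simps)
    then have "mean M X = (\<integral>w. (1/p1) * poly (P 1) (X w) - p0 / p1 \<partial>M)" unfolding mean_def by metis
    also have "\<dots> = (1/p1) * (\<integral>w. poly (P 1) (X w) \<partial>M) - p0 / p1"
      using EX1(1)[of 1] by (simp add: Bochner_Integration.integral_diff PS.prob_space)
    finally show ?thesis using EX1(2)[of 1] by simp
  qed
  have mY: "mean M Y = - q0 / q1"
  proof -
    have "(\<lambda>w. Y w) = (\<lambda>w. (1/q1) * poly (Q 1) (Y w) - q0 / q1)" using q1 unfolding Q1 by (auto simp: fun_eq_iff field_simps)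
    then have "mean M Y = (\<integral>w. (1/q1) * poly (Q 1) (Y w) - q0 / q1 \<partial>M)" unfolding mean_def by metis
    also have "\<dots> = (1/q1) * (\<integral>w. poly (Q 1) (Y w) \<partial>M) - q0 / q1"
      using EY1(1)[of 1] by (simp add: Bochner_Integration.integral_diff PS.prob_space)
    finally show ?thesis using EY1(2)[of 1] by simp
  qed
  have Xc: "X w - mean M X = poly (P 1) (X w) / p1" for w using p1 unfolding mX P1 by (simp add: field_simps)
  have Yc: "Y w - mean M Y = poly (Q 1) (Y w) / q1" for w using q1 unfolding mY Q1 by (simp add: field_simps)
  have vX: "var M X = 1 / p1^2"
  proof -
    have "var M X = (\<integral>w. (1 / p1^2) * (poly (P 1) (X w) * poly (P 1) (X w)) \<partial>M)"
      unfolding var_def Xc by (simp add: power2_eq_square)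
    also have "\<dots> = 1 / p1^2" using EXX(2)[of 1 1] by simp
    finally show ?thesis .
  qed
  have vY: "var M Y = 1 / q1^2"
  proof -
    have "var M Y = (\<integral>w. (1 / q1^2) * (poly (Q 1) (Y w) * poly (Q 1) (Y w)) \<partial>M)"
      unfolding var_def Yc by (simp add: power2_eq_square)
    also have "\<dots> = 1 / q1^2" using EYY(2)[of 1 1] by simp
    finally show ?thesis .
  qed
  have cXY: "covar M X Y = rho 1 / (p1 * q1)"
  proof -
    have "covar M X Y = (\<integral>w. (1 / (p1 * q1)) * (poly (P 1) (X w) * poly (Q 1) (Y w)) \<partial>M)"
      unfolding covar_def Xc Yc by simp
    also have "\<dots> = rho 1 / (p1 * q1)" using EXY(2)[of 1 1] by simp
    finally show ?thesis .
  qed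
  have pc: "pcorr M X Y = rho 1"
  proof -
    have "sqrt (1 / p1^2 * (1 / q1^2)) = 1 / (p1 * q1)"
      using p1 q1 by (simp add: real_sqrt_mult real_sqrt_divide)
    then show ?thesis unfolding pcorr_def cXY vX vY using p1 q1 by simp
  qed
  have bdd: "bdd_above (range (\<lambda>n. \<bar>rho (n + 2)\<bar>))"
    by (rule bdd_aboveI2[of _ _ 1]) (metis add_2_eq_Suc' rho_bound)
  obtain n where n: "\<bar>rho 1\<bar> < \<bar>rho (n + 2)\<bar>" using r1lt less_cSUP_iff[OF _ bdd] by auto
  define m where "m = n + 2"
  have m0: "m \<noteq> 0" unfolding m_def by simp
  have rm: "\<bar>rho 1\<bar> < \<bar>rho m\<bar>" using n unfolding m_def .
  then have rm0: "rho m \<noteq> 0" using r1 by auto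
  define s where "s = sgn (rho m)"
  have s2: "s * s = 1" unfolding s_def using rm0 by (simp add: sgn_if)
  have srho: "s * rho m = \<bar>rho m\<bar>" unfolding s_def by (simp add: sgn_if)
  define g1 where "g1 = (\<lambda>x. s * poly (P m) x)"
  define g2 where "g2 = (\<lambda>y. poly (Q m) y)"
  have g1m: "g1 \<in> borel_measurable borel" unfolding g1_def by measurable
  have g2m: "g2 \<in> borel_measurable borel" unfolding g2_def by measurable
  have mg1: "mean M (\<lambda>w. g1 (X w)) = 0" unfolding mean_def g1_def using EX1(2)[of m] m0 by simp
  have mg2: "mean M (\<lambda>w. g2 (Y w)) = 0" unfolding mean_def g2_def using EY1(2)[of m] m0 by simp
  have sq1: "(\<lambda>w. (g1 (X w))^2) = (\<lambda>w. (s * s) * (poly (P m) (X w) * poly (P m) (X w)))"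
    unfolding g1_def by (auto simp: power2_eq_square mult_ac)
  have sq2: "(\<lambda>w. (g2 (Y w))^2) = (\<lambda>w. poly (Q m) (Y w) * poly (Q m) (Y w))"
    unfolding g2_def by (auto simp: power2_eq_square)
  have vg1: "var M (\<lambda>w. g1 (X w)) = 1" unfolding var_def mg1 using EXX(2)[of m m] sq1 s2 by simp
  have vg2: "var M (\<lambda>w. g2 (Y w)) = 1" unfolding var_def mg2 using EYY(2)[of m m] sq2 by simp
  have g1L: "g1 \<in> L2star M X" unfolding L2star_def using g1m vg1 sq1 EXX(1)[of m m] by simp
  have g2L: "g2 \<in> L2star M Y" unfolding L2star_def using g2m vg2 sq2 EYY(1)[of m m] by simp
  have pcg: "pcorr M (\<lambda>w. g1 (X w)) (\<lambda>w. g2 (Y w)) = \<bar>rho m\<bar>"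
  proof -
    have "covar M (\<lambda>w. g1 (X w)) (\<lambda>w. g2 (Y w)) = (\<integral>w. s * (poly (P m) (X w) * poly (Q m) (Y w)) \<partial>M)"
      unfolding covar_def mg1 mg2 unfolding g1_def g2_def by (simp add: mult_ac)
    also have "\<dots> = s * rho m" using EXY(2)[of m m] m0 by simp
    finally show ?thesis unfolding pcorr_def vg1 vg2 srho by simp
  qed
  have bddM: "bdd_above ((\<lambda>g. pcorr M (\<lambda>w. fst g (X w)) (\<lambda>w. snd g (Y w))) ` (L2star M X \<times> L2star M Y))"
  proof (rule bdd_aboveI2[of _ _ 1])
    fix g assume g: "g \<in> L2star M X \<times> L2star M Y"
    then have h1: "fst g \<in> borel_measurable borel" "integrable M (\<lambda>w. (fst g (X w))^2)" "0 < var M (\<lambda>w. fst g (X w))"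
      and h2: "snd g \<in> borel_measurable borel" "integrable M (\<lambda>w. (snd g (Y w))^2)" "0 < var M (\<lambda>w. snd g (Y w))"
      unfolding L2star_def by auto
    have m1: "(\<lambda>w. fst g (X w)) \<in> borel_measurable M" using measurable_compose[OF Xm h1(1)] .
    have m2: "(\<lambda>w. snd g (Y w)) \<in> borel_measurable M" using measurable_compose[OF Ym h2(1)] .
    show "pcorr M (\<lambda>w. fst g (X w)) (\<lambda>w. snd g (Y w)) \<le> 1"
      by (rule pcorr_le1[OF PS m1 m2 h1(2) h2(2) h1(3) h2(3)])
  qed
  have "\<bar>rho m\<bar> \<le> maxcorr M X Y"
  proof -
    have "(g1, g2) \<in> L2star M X \<times> L2star M Y" using g1L g2L by simp
    from cSUP_upper[OF this bddM] show ?thesis unfolding maxcorr_def using pcg by simp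
  qed
  then have "maxcorr M X Y > \<bar>pcorr M X Y\<bar>" using rm pc by simp
  moreover have "\<bar>pcorr M X Y\<bar> > 0" using pc r1 by simp
  ultimately show ?thesis using CE1 CE2 a1b1 by blast
qed

end

lemma part2:
  assumes d1: "bdd_density f1 al1 om1" and d2: "bdd_density f2 al2 om2"
    and o1: "orthonormal_polys f1 P" and o2: "orthonormal_polys f2 Q"
  shows "\<exists>rho :: nat \<Rightarrow> real. admissible al1 om1 al2 om2 P Q rho \<and>
          0 < \<bar>rho 1\<bar> \<and> \<bar>rho 1\<bar> < (SUP n. \<bar>rho (n + 2)\<bar>)"
proof -
  define c where "c = (\<lambda>n. sup_on al1 om1 (P n) * sup_on al2 om2 (Q n))"
  have c1: "1 \<le> c n" for n unfolding c_def
    using ortho_sup_ge1[OF o1 d1, of n] ortho_sup_ge1[OF o2 d2, of n]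
    by (metis mult_mono' mult_1 zero_le_one)
  define lam where "lam = 1 / (c 1 + 2 * c 2)"
  have lam0: "lam > 0" unfolding lam_def using c1[of 1] c1[of 2] by simp
  define rho where "rho = (\<lambda>n::nat. if n = 1 then lam else if n = 2 then 2 * lam else 0)"
  define T where "T = (\<lambda>n. \<bar>rho (Suc n)\<bar> * sup_on al1 om1 (P (Suc n)) * sup_on al2 om2 (Q (Suc n)))"
  have T0: "T n = 0" if "n \<notin> {0, 1}" for n using that unfolding T_def rho_def by auto
  have sT: "summable T" by (rule summable_finite[of "{0,1}"]) (use T0 in auto)
  have "suminf T = T 0 + T 1" by (subst suminf_finite[of "{0,1}"]) (use T0 in auto)
  also have "\<dots> = lam * c 1 + 2 * lam * c 2" unfolding T_def rho_def c_def using lam0 by (simp add: mult_ac numeral_2_eq_2)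
  also have "\<dots> = lam * (c 1 + 2 * c 2)" by (simp add: algebra_simps)
  also have "\<dots> = 1" unfolding lam_def using c1[of 1] c1[of 2] by simp
  finally have adm: "admissible al1 om1 al2 om2 P Q rho" unfolding admissible_def T_def[symmetric] using sT by simp
  have bdd: "bdd_above (range (\<lambda>n. \<bar>rho (n + 2)\<bar>))"
    by (rule bdd_aboveI2[of _ _ "2 * lam"]) (use lam0 in \<open>auto simp: rho_def\<close>)
  have "\<bar>rho (0 + 2)\<bar> \<le> (SUP n. \<bar>rho (n + 2)\<bar>)" by (rule cSUP_upper[OF _ bdd]) simp
  then have "\<bar>rho 1\<bar> < (SUP n. \<bar>rho (n + 2)\<bar>)" unfolding rho_def using lam0 by simp
  moreover have "0 < \<bar>rho 1\<bar>" unfolding rho_def using lam0 by simp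
  ultimately show ?thesis using adm by blast
qed



theorem mainTheorem4:
  fixes f1 f2 :: "real \<Rightarrow> real" and al1 om1 al2 om2 :: real
    and P Q :: "nat \<Rightarrow> real poly"
  assumes d1: "bdd_density f1 al1 om1" and d2: "bdd_density f2 al2 om2"
    and o1: "orthonormal_polys f1 P" and o2: "orthonormal_polys f2 Q"
  shows
   "(\<forall>rho :: nat \<Rightarrow> real.
       admissible al1 om1 al2 om2 P Q rho \<and>
       0 < \<bar>rho 1\<bar> \<and> \<bar>rho 1\<bar> < (SUP n. \<bar>rho (n + 2)\<bar>) \<longrightarrow>
       (\<forall>(M :: 'a measure) (X :: 'a \<Rightarrow> real) (Y :: 'a \<Rightarrow> real).
          prob_space M \<and>
          distributed M (lborel \<Otimes>\<^sub>M lborel) (\<lambda>w. (X w, Y w))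
            (\<lambda>(x, y). ennreal (biv_density f1 f2 al1 om1 al2 om2 P Q rho x y)) \<longrightarrow>
          (\<exists>a0 a1 b0 b1 :: real. a1 * b1 \<noteq> 0 \<and>
             (AE w in M. real_cond_exp M (vimage_algebra (space M) Y borel) X w = a1 * Y w + a0) \<and>
             (AE w in M. real_cond_exp M (vimage_algebra (space M) X borel) Y w = b1 * X w + b0) \<and>
             maxcorr M X Y > \<bar>pcorr M X Y\<bar> \<and> \<bar>pcorr M X Y\<bar> > 0)))
    \<and> (\<exists>rho :: nat \<Rightarrow> real. admissible al1 om1 al2 om2 P Q rho \<and>
          0 < \<bar>rho 1\<bar> \<and> \<bar>rho 1\<bar> < (SUP n. \<bar>rho (n + 2)\<bar>))"
  apply (rule conjI)
   apply (intro allI impI)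
   apply (elim conjE)
   apply (rule biv.part1[OF biv.intro[OF d1 d2 o1 o2]]; assumption)
  apply (rule part2[OF d1 d2 o1 o2])
  done

end
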